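(* For all integers $s,t\ge 1$ there exists an $H(2^{t+1},\,s2^t,\,2^{t+1}-1,\,2^{t+1}-2)$ design.
   Context: For an integer $q\ge1$, $Q_q=\{0,1,\dots,q-1\}$ and $Q_{q*}=Q_q\cup\{*\}$. The weight of a word $u\in Q_{q*}^n$ is $n$ minus the number of $*$ symbols in $u$. For $u,v\in Q_{q*}^n$ we say $u$ extends $v$ if $u_i=v_i$ for every position $i$ with $v_i\neq *$. For integers $n\ge w\ge t\ge1$, $q\ge1$, an $H(n,q,w,t)$ design is a set $S$ of words of weight $w$ in $Q_{q*}^n$ such that every word of weight $t$ in $Q_{q*}^n$ is extended by exactly one element of $S$. *)

theory Defs
  imports Main
begin

text \<open>A word in Q_{q*}^n is a list of length n over nat option, where None is the
  symbol * and Some a (with a < q) is the letter a of Q_q = {0..q-1}.\<close>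

definition words :: "nat \<Rightarrow> nat \<Rightarrow> nat option list set" where
  "words n q = {u. length u = n \<and> (\<forall>a. Some a \<in> set u \<longrightarrow> a < q)}"

definition weight :: "nat option list \<Rightarrow> nat" where
  "weight u = length u - length (filter (\<lambda>x. x = None) u)"

definition extends :: "nat option list \<Rightarrow> nat option list \<Rightarrow> bool" where
  "extends u v \<longleftrightarrow> length u = length v \<and>
     (\<forall>i < length v. v ! i \<noteq> None \<longrightarrow> u ! i = v ! i)"

definition H_design :: "nat \<Rightarrow> nat \<Rightarrow> nat \<Rightarrow> nat \<Rightarrow> nat option list set \<Rightarrow> bool" where
  "H_design n q w t S \<longleftrightarrow>
     S \<subseteq> {u \<in> words n q. weight u = w} \<and>
     (\<forall>v \<in> words n q. weight v = t \<longrightarrow> (\<exists>!u. u \<in> S \<and> extends u v))"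

end

theory Submission
  imports Defs "Berlekamp_Zassenhaus.Distinct_Degree_Factorization" "HOL-Computational_Algebra.Squarefree"
begin


lemma two_eq_0_bool: "(2::bool mod_ring) = 0"
proof -
  have "(of_nat (CARD(bool)) :: bool mod_ring) = 0" by (rule of_nat_card_eq_0)
  thus ?thesis by simp
qed

lemma of_nat_pow2_eq_0: "m \<ge> 1 \<Longrightarrow> (of_nat (2^m) :: bool mod_ring) = 0"
  using two_eq_0_bool by (simp add: power_0_left)

lemma degree_gX:
  assumes "d \<ge> 1"
  shows "degree ((monom 1 1 :: bool mod_ring poly) ^ (2^d) - monom 1 1) = 2^d"
proof -
  have e: "(monom 1 1 :: bool mod_ring poly) ^ (2^d) = monom 1 (2^d)"
    by (simp add: monom_power)
  have "(1::nat) < 2^d" by (rule one_less_power) (use assms in auto)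
  then show ?thesis unfolding e
    by (subst degree_minus_eq_right) (simp_all add: degree_monom_eq)
qed

lemma squarefree_gX:
  assumes "m \<ge> 1"
  shows "squarefree ((monom 1 1 :: bool mod_ring poly) ^ (2^m) - monom 1 1)"
proof -
  let ?g = "(monom 1 1 :: bool mod_ring poly) ^ (2^m) - monom 1 1"
  have e: "(monom 1 1 :: bool mod_ring poly) ^ (2^m) = monom 1 (2^m)"
    by (simp add: monom_power)
  have pd: "pderiv ?g = -1"
    unfolding e using of_nat_pow2_eq_0[OF assms]
    by (simp add: pderiv_diff pderiv_monom)
  show ?thesis unfolding squarefree_def
  proof (intro allI impI)
    fix x :: "bool mod_ring poly"
    assume "x\<^sup>2 dvd ?g"
    then obtain h where "?g = x\<^sup>2 * h" by (elim dvdE)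
    then have h: "?g = x * (x * h)" by (simp add: power2_eq_square mult.assoc)
    have "pderiv ?g = x * pderiv (x * h) + pderiv x * (x * h)"
      by (subst h) (simp add: pderiv_mult)
    also have "\<dots> = x * (pderiv (x*h) + pderiv x * h)" by (simp add: algebra_simps)
    finally have "x dvd pderiv ?g" by simp
    hence "x dvd -1" using pd by simp
    thus "x dvd 1" by simp
  qed
qed

lemma exists_irreducible_deg:
  assumes m: "m \<ge> 1"
  shows "\<exists>f :: bool mod_ring poly. irreducible f \<and> degree f = m"
proof (rule ccontr)
  assume H: "\<not> ?thesis"
  define g where "g d = (monom 1 1 :: bool mod_ring poly) ^ (2^d) - monom 1 1" for d
  define P where "P = (\<Prod>d\<in>{1..<m}. g d)"
  have degg: "d \<ge> 1 \<Longrightarrow> degree (g d) = 2^d" for d unfolding g_def by (rule degree_gX)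
  have gnz: "d \<ge> 1 \<Longrightarrow> g d \<noteq> 0" for d using degg[of d]
    by (metis degree_0 power_not_zero zero_neq_numeral)
  have Pnz: "P \<noteq> 0" unfolding P_def using gnz by (auto simp: prod_zero_iff)
  have gm: "g m \<noteq> 0" using gnz m by auto
  have sf: "squarefree (g m)" unfolding g_def by (rule squarefree_gX[OF m])
  have card2: "CARD(bool) = 2" by simp
  have "g m dvd P"
  proof (rule multiplicity_le_imp_dvd[OF gm])
    fix p :: "bool mod_ring poly" assume pp: "prime p"
    have le1: "multiplicity p (g m) \<le> 1" using sf gm pp squarefree_factorial_semiring'' by blast
    show "multiplicity p (g m) \<le> multiplicity p P"
    proof (cases "p dvd g m")
      case False
      then have "multiplicity p (g m) = 0" by (simp add: not_dvd_imp_multiplicity_0)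
      thus ?thesis by simp
    next
      case True
      have ppe: "prime_elem p" using pp by (rule prime_imp_prime_elem)
      have irr: "irreducible p" using ppe by (rule prime_elem_imp_irreducible)
      have pnu: "\<not> is_unit p" using ppe by (rule prime_elem_not_unit)
      have pnz: "p \<noteq> 0" using ppe by (auto simp: prime_elem_def)
      have d1: "degree p \<ge> 1" using pnu pnz is_unit_iff_degree[OF pnz] by simp
      have dm: "degree p \<noteq> m" using H irr by blast
      have "\<not> degree p > m"
      proof
        assume "degree p > m"
        from degree_divisor2[OF irr refl m this] True show False
          unfolding g_def card2 by simp
      qed
      with dm have dlt: "degree p < m" by simp
      have "p dvd g (degree p)" using degree_divisor1[OF irr refl] unfolding g_def card2 .
      also have "g (degree p) dvd P" unfolding P_def
        by (rule dvd_prodI) (use d1 dlt in auto)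
      finally have "p dvd P" .
      then have "0 < multiplicity p P" using prime_multiplicity_gt_zero_iff[OF ppe Pnz] by simp
      then show ?thesis using le1 by simp
    qed
  qed
  then have "degree (g m) \<le> degree P" using Pnz by (rule dvd_imp_degree_le)
  also have "\<dots> \<le> (\<Sum>d\<in>{1..<m}. degree (g d))" unfolding P_def
    by (rule order.trans[OF degree_prod_sum_le]) simp_all
  also have "\<dots> = (\<Sum>d\<in>{1..<m}. 2^d)" using degg by simp
  also have "\<dots> \<le> (\<Sum>d<m. (2::nat)^d)" by (rule sum_mono2) auto
  also have "\<dots> < 2^m"
  proof -
    have "(\<Sum>d<k. (2::nat)^d) < 2^k" for k by (induction k) auto
    thus ?thesis .
  qed
  finally show False using degg[OF m] by simp
qed



definition synd :: "nat \<Rightarrow> nat \<Rightarrow> (nat \<Rightarrow> nat \<Rightarrow> nat \<Rightarrow> 'w::ab_group_add) \<Rightarrow> nat \<Rightarrow> nat option list \<Rightarrow> 'w" where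
  "synd n q0 N p u = (\<Sum>k\<in>{..<n}-{p}. N p k (the (u!k) mod q0))"

definition hsum :: "nat \<Rightarrow> nat \<Rightarrow> nat \<Rightarrow> nat option list \<Rightarrow> nat" where
  "hsum n q0 p u = (\<Sum>k\<in>{..<n}-{p}. the (u!k) div q0)"

definition Sset :: "nat \<Rightarrow> nat \<Rightarrow> nat \<Rightarrow> (nat \<Rightarrow> 'w::ab_group_add) \<Rightarrow> (nat \<Rightarrow> nat \<Rightarrow> nat \<Rightarrow> 'w) \<Rightarrow> nat option list set" where
  "Sset n q0 s c N = {u \<in> words n (s*q0). \<exists>p<n. u!p = None \<and> (\<forall>k<n. k\<noteq>p \<longrightarrow> u!k \<noteq> None) \<and>
      synd n q0 N p u = c p \<and> hsum n q0 p u mod s = 0}"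

lemma weight_one_none:
  assumes "length u = n" "p < n" "u!p = None" "\<forall>k<n. k\<noteq>p \<longrightarrow> u!k \<noteq> None"
  shows "weight u = n - 1"
proof -
  have "{i. i < length u \<and> u!i = None} = {p}" using assms by auto
  hence "length (filter (\<lambda>x. x = None) u) = 1" by (simp add: length_filter_conv_card)
  thus ?thesis using assms by (simp add: weight_def)
qed

lemma two_nones:
  assumes "v \<in> words n q" "weight v = n - 2" "n \<ge> 2"
  shows "\<exists>i j. i<n \<and> j<n \<and> i\<noteq>j \<and> v!i = None \<and> v!j = None \<and> (\<forall>k<n. k\<noteq>i \<longrightarrow> k\<noteq>j \<longrightarrow> v!k \<noteq> None)"
proof -
  have len: "length v = n" using assms(1) by (simp add: words_def)
  have le: "length (filter (\<lambda>x. x = None) v) \<le> n" using len by (metis length_filter_le)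
  have "length (filter (\<lambda>x. x = None) v) = 2" using assms(2,3) le len unfolding weight_def by linarith
  hence "card {i. i < n \<and> v!i = None} = 2" using len by (simp add: length_filter_conv_card)
  then obtain i j where ij: "{i. i < n \<and> v!i = None} = {i,j}" "i \<noteq> j" by (auto simp: card_2_iff)
  have "i \<in> {i. i < n \<and> v!i = None}" "j \<in> {i. i < n \<and> v!i = None}" using ij by auto
  moreover have "\<forall>k<n. k\<noteq>i \<longrightarrow> k\<noteq>j \<longrightarrow> v!k \<noteq> None"
  proof (intro allI impI)
    fix k assume "k < n" "k \<noteq> i" "k \<noteq> j"
    then have "k \<notin> {i. i < n \<and> v!i = None}" using ij by auto
    thus "v!k \<noteq> None" using \<open>k<n\<close> by auto
  qed
  ultimately show ?thesis using ij by blast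
qed

lemma sum_split2:
  fixes f :: "nat \<Rightarrow> 'a::comm_monoid_add"
  assumes "r < n" "p \<noteq> r"
  shows "(\<Sum>k\<in>{..<n}-{p}. f k) = f r + (\<Sum>k\<in>{..<n}-{p,r}. f k)"
proof -
  have "{..<n}-{p} = insert r ({..<n}-{p,r})" using assms by auto
  thus ?thesis by (simp add: sum.insert_remove)
qed

lemma side_char:
  fixes N :: "nat \<Rightarrow> nat \<Rightarrow> nat \<Rightarrow> 'w::ab_group_add"
  assumes v: "v \<in> words n (s*q0)" and pr: "p < n" "r < n" "p \<noteq> r"
    and vp: "v!p = None" and vr: "v!r = None"
    and vo: "\<forall>k<n. k\<noteq>p \<longrightarrow> k\<noteq>r \<longrightarrow> v!k \<noteq> None"
  shows "(u \<in> Sset n q0 s c N \<and> extends u v \<and> u!p = None) \<longleftrightarrow>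
    (\<exists>a. a < s*q0 \<and> u = v[r := Some a] \<and>
       N p r (a mod q0) = c p - (\<Sum>k\<in>{..<n}-{p,r}. N p k (the (v!k) mod q0)) \<and>
       ((\<Sum>k\<in>{..<n}-{p,r}. the (v!k) div q0) + a div q0) mod s = 0)"
    (is "?L \<longleftrightarrow> ?R")
proof
  have lenv: "length v = n" using v by (simp add: words_def)
  assume L: ?L
  hence uS: "u \<in> Sset n q0 s c N" and ext0: "extends u v" and up: "u!p = None" by auto
  from uS have uw: "u \<in> words n (s*q0)" and "\<exists>p'<n. u!p' = None \<and> (\<forall>k<n. k\<noteq>p' \<longrightarrow> u!k \<noteq> None) \<and>
      synd n q0 N p' u = c p' \<and> hsum n q0 p' u mod s = 0" unfolding Sset_def by simp_all
  then obtain p' where P: "p' < n \<and> u!p' = None \<and> (\<forall>k<n. k\<noteq>p' \<longrightarrow> u!k \<noteq> None) \<and>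
      synd n q0 N p' u = c p' \<and> hsum n q0 p' u mod s = 0" by (elim exE)
  from P have p': "p' < n" "u!p' = None" "\<forall>k<n. k\<noteq>p' \<longrightarrow> u!k \<noteq> None"
    "synd n q0 N p' u = c p'" "hsum n q0 p' u mod s = 0" by simp_all
  have "p' = p"
  proof (rule ccontr)
    assume "p' \<noteq> p"
    then have "u!p \<noteq> None" using p'(3) pr(1) by simp
    thus False using up by simp
  qed
  note p' = p'[unfolded this]
  have lenu: "length u = n" using uw by (simp add: words_def)
  obtain a where ua: "u!r = Some a" using p'(3) pr by (cases "u!r") auto
  have "u!r \<in> set u" using pr lenu by simp
  hence "Some a \<in> set u" using ua by simp
  hence alt: "a < s*q0" using uw unfolding words_def by blast
  have ext: "\<forall>k<n. v!k \<noteq> None \<longrightarrow> u!k = v!k" using ext0 lenv unfolding extends_def by auto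
  have agree: "\<forall>k\<in>{..<n}-{p,r}. u!k = v!k" using ext vo by auto
  have ueq: "u = v[r := Some a]"
  proof (rule nth_equalityI)
    show "length u = length (v[r := Some a])" using lenu lenv by simp
    fix k assume "k < length u"
    then have k: "k < n" using lenu by simp
    show "u!k = v[r := Some a]!k"
    proof (cases "k = r")
      case True thus ?thesis using ua lenv pr by simp
    next
      case False
      show ?thesis
      proof (cases "k = p")
        case True thus ?thesis using False p'(2) vp by simp
      next
        case False2: False
        thus ?thesis using False agree k by simp
      qed
    qed
  qed
  have "synd n q0 N p u = N p r (a mod q0) + (\<Sum>k\<in>{..<n}-{p,r}. N p k (the (v!k) mod q0))"
    unfolding synd_def using pr ua agree by (simp add: sum_split2)
  hence e1: "N p r (a mod q0) = c p - (\<Sum>k\<in>{..<n}-{p,r}. N p k (the (v!k) mod q0))"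
    using p'(4) by (simp add: eq_diff_eq)
  have "hsum n q0 p u = a div q0 + (\<Sum>k\<in>{..<n}-{p,r}. the (v!k) div q0)"
    unfolding hsum_def using pr ua agree by (simp add: sum_split2)
  hence e2: "((\<Sum>k\<in>{..<n}-{p,r}. the (v!k) div q0) + a div q0) mod s = 0"
    using p'(5) by (simp add: add.commute)
  show ?R by (intro exI[of _ a] conjI alt ueq e1 e2)
next
  have lenv: "length v = n" using v by (simp add: words_def)
  assume ?R
  then obtain a where A: "a < s*q0 \<and> u = v[r := Some a] \<and>
    N p r (a mod q0) = c p - (\<Sum>k\<in>{..<n}-{p,r}. N p k (the (v!k) mod q0)) \<and>
    ((\<Sum>k\<in>{..<n}-{p,r}. the (v!k) div q0) + a div q0) mod s = 0" by (elim exE)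
  have a1: "a < s*q0" using conjunct1[OF A] .
  have a2: "u = v[r := Some a]" using conjunct1[OF conjunct2[OF A]] .
  have a3: "N p r (a mod q0) = c p - (\<Sum>k\<in>{..<n}-{p,r}. N p k (the (v!k) mod q0))" using conjunct1[OF conjunct2[OF conjunct2[OF A]]] .
  have a4: "((\<Sum>k\<in>{..<n}-{p,r}. the (v!k) div q0) + a div q0) mod s = 0" using conjunct2[OF conjunct2[OF conjunct2[OF A]]] .
  note a = a1 a2 a3 a4
  have lenu: "length u = n" using a(2) lenv by simp
  have agree: "\<forall>k\<in>{..<n}-{p,r}. u!k = v!k" using a(2) by auto
  have ur: "u!r = Some a" using a(2) lenv pr by simp
  have up: "u!p = None" using a(2) vp pr by simp
  have uw: "u \<in> words n (s*q0)"
  proof -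
    have "\<forall>b. Some b \<in> set v \<longrightarrow> b < s*q0" using v by (simp add: words_def)
    moreover have "set u \<subseteq> insert (Some a) (set v)" using a(2) by (simp add: set_update_subset_insert)
    ultimately show ?thesis using lenu a(1) unfolding words_def by auto
  qed
  have uo: "\<forall>k<n. k\<noteq>p \<longrightarrow> u!k \<noteq> None"
  proof (intro allI impI)
    fix k assume "k<n" "k\<noteq>p"
    thus "u!k \<noteq> None" using ur agree vo by (cases "k = r") auto
  qed
  have "synd n q0 N p u = N p r (a mod q0) + (\<Sum>k\<in>{..<n}-{p,r}. N p k (the (v!k) mod q0))"
    unfolding synd_def using pr ur agree by (simp add: sum_split2)
  hence s1: "synd n q0 N p u = c p" using a(3) by simp
  have "hsum n q0 p u = a div q0 + (\<Sum>k\<in>{..<n}-{p,r}. the (v!k) div q0)"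
    unfolding hsum_def using pr ur agree by (simp add: sum_split2)
  hence s2: "hsum n q0 p u mod s = 0" using a(4) by (simp add: add.commute)
  have inS: "u \<in> Sset n q0 s c N" unfolding Sset_def mem_Collect_eq
    by (intro conjI exI[of _ p] uw pr(1) up uo s1 s2)
  have ext: "extends u v" unfolding extends_def
  proof (intro conjI allI impI)
    show "length u = length v" using lenu lenv by simp
    fix k assume "k < length v" "v!k \<noteq> None"
    then have "k \<noteq> r" using vr by auto
    thus "u!k = v!k" using a(2) by simp
  qed
  show ?L by (intro conjI inS ext up)
qed

lemma mod_helper: "0 < (s::nat) \<Longrightarrow> (Y + x + (s - Y mod s)) mod s = x mod s"
proof -
  assume s: "0 < s"
  have "Y mod s < s" using s by simp
  moreover have "s * (Y div s) + Y mod s = Y" by simp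
  ultimately have "Y + x + (s - Y mod s) = x + s * (Y div s) + s" by linarith
  also have "\<dots> = x + s * (Y div s + 1)" by (simp add: algebra_simps)
  finally have e: "Y + x + (s - Y mod s) = x + s * (Y div s + 1)" .
  show ?thesis unfolding e by (simp only: mod_mult_self2)
qed
lemma mod_cancel_lt: "(Y + x) mod s = (Y + y) mod (s::nat) \<Longrightarrow> x < s \<Longrightarrow> y < s \<Longrightarrow> x = y"
proof -
  assume h: "(Y + x) mod s = (Y + y) mod (s::nat)" "x < s" "y < s"
  hence s: "0 < s" by simp
  have "(Y + x + (s - Y mod s)) mod s = (Y + y + (s - Y mod s)) mod s" using h(1) by (rule mod_add_cong) simp
  thus "x = y" using mod_helper[OF s, of Y x] mod_helper[OF s, of Y y] h by simp
qed

lemma count_side: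
  fixes q0 s Y :: nat
  assumes bij: "bij_betw F {..<q0} Hs" and T: "T \<in> Hs" and s: "s \<ge> 1"
  shows "\<exists>!a. a < s*q0 \<and> F (a mod q0) = T \<and> (Y + a div q0) mod s = 0"
proof -
  obtain lo where lo: "lo < q0" "F lo = T" using bij T unfolding bij_betw_def by auto
  have q0: "0 < q0" using lo by linarith
  have s0: "0 < s" using s by simp
  define hi where "hi = (s - Y mod s) mod s"
  have hi: "hi < s" using s0 by (simp add: hi_def)
  have "(Y + hi) mod s = (Y + (s - Y mod s)) mod s" unfolding hi_def by (simp add: mod_add_right_eq)
  also have "\<dots> = (Y + 0 + (s - Y mod s)) mod s" by simp
  also have "\<dots> = 0" using mod_helper[OF s0, of Y 0] by simp
  finally have hY: "(Y + hi) mod s = 0" .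
  define a where "a = lo + q0*hi"
  have amod: "a mod q0 = lo" unfolding a_def using lo by simp
  have adiv: "a div q0 = hi" unfolding a_def using lo q0 by simp
  have "a < q0 * (hi + 1)" unfolding a_def using lo by (simp add: algebra_simps)
  also have "\<dots> \<le> q0 * s" using hi by (intro mult_le_mono2) simp
  finally have alt: "a < s*q0" by (simp add: mult.commute)
  show ?thesis
  proof (rule ex1I[of _ a])
    show "a < s*q0 \<and> F (a mod q0) = T \<and> (Y + a div q0) mod s = 0" using alt amod adiv lo hY by simp
  next
    fix b assume b: "b < s*q0 \<and> F (b mod q0) = T \<and> (Y + b div q0) mod s = 0"
    have "b mod q0 < q0" using q0 by simp
    hence bm: "b mod q0 = lo" using b lo bij unfolding bij_betw_def inj_on_def by auto
    have "b div q0 < s" using b q0 by (simp add: less_mult_imp_div_less)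
    hence bd: "b div q0 = hi" using mod_cancel_lt[of Y "b div q0" s hi] b hY hi by simp
    show "b = a" using bm bd amod adiv by (metis div_mult_mod_eq)
  qed
qed

lemma sum_in_closed:
  fixes f :: "nat \<Rightarrow> 'w::ab_group_add"
  assumes "finite K" "0 \<in> A" "\<And>x y. x \<in> A \<Longrightarrow> y \<in> A \<Longrightarrow> x + y \<in> A" "\<And>k. k \<in> K \<Longrightarrow> f k \<in> A"
  shows "sum f K \<in> A"
  using assms(1,4)
proof (induction K rule: finite_induct)
  case empty thus ?case using assms(2) by simp
next
  case (insert x F) thus ?case using assms(3) by simp
qed

lemma design_from_syndrome:
  fixes n q0 s :: nat and U :: "'w::ab_group_add set" and c :: "nat \<Rightarrow> 'w"
    and N :: "nat \<Rightarrow> nat \<Rightarrow> nat \<Rightarrow> 'w" and H :: "nat \<Rightarrow> nat \<Rightarrow> 'w set"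
  assumes n2: "n \<ge> 2" and s1: "s \<ge> 1" and q1: "q0 \<ge> 1"
    and Hsym: "\<And>i j. H i j = H j i"
    and H0: "\<And>i j. 0 \<in> H i j"
    and Hadd: "\<And>i j x y. x \<in> H i j \<Longrightarrow> y \<in> H i j \<Longrightarrow> x + y \<in> H i j"
    and Hminus: "\<And>i j x. x \<in> H i j \<Longrightarrow> - x \<in> H i j"
    and HU: "\<And>i j. H i j \<subseteq> U"
    and U0: "0 \<in> U"
    and Uadd: "\<And>x y. x \<in> U \<Longrightarrow> y \<in> U \<Longrightarrow> x + y \<in> U"
    and Uminus: "\<And>x. x \<in> U \<Longrightarrow> - x \<in> U"
    and cU: "\<And>i. i < n \<Longrightarrow> c i \<in> U"
    and Hidx: "\<And>i j x y. i<n \<Longrightarrow> j<n \<Longrightarrow> i\<noteq>j \<Longrightarrow> x \<in> U \<Longrightarrow> y \<in> U \<Longrightarrow> x \<notin> H i j \<Longrightarrow> y \<notin> H i j \<Longrightarrow> x - y \<in> H i j"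
    and Nbij: "\<And>i j. i<n \<Longrightarrow> j<n \<Longrightarrow> i\<noteq>j \<Longrightarrow> bij_betw (N i j) {..<q0} (H i j)"
    and Ncons: "\<And>i j k a. i<n \<Longrightarrow> j<n \<Longrightarrow> k<n \<Longrightarrow> i\<noteq>j \<Longrightarrow> i\<noteq>k \<Longrightarrow> j\<noteq>k \<Longrightarrow> a<q0 \<Longrightarrow> N i k a - N j k a \<in> H i j"
    and csep: "\<And>i j. i<n \<Longrightarrow> j<n \<Longrightarrow> i\<noteq>j \<Longrightarrow> c i - c j \<notin> H i j"
  shows "\<exists>S. H_design n (s*q0) (n-1) (n-2) S"
proof
  let ?S = "Sset n q0 s c N"
  have q0: "0 < q0" using q1 by simp
  have NH: "\<And>i j a. i<n \<Longrightarrow> j<n \<Longrightarrow> i\<noteq>j \<Longrightarrow> N i j (a mod q0) \<in> H i j"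
  proof -
    fix i j a assume "i<n" "j<n" "i\<noteq>j"
    moreover have "a mod q0 \<in> {..<q0}" using q0 by simp
    ultimately show "N i j (a mod q0) \<in> H i j" using Nbij unfolding bij_betw_def by blast
  qed
  have Hdiff: "\<And>i j x y. x \<in> H i j \<Longrightarrow> y \<in> H i j \<Longrightarrow> x - y \<in> H i j"
    using Hadd Hminus by (metis diff_conv_add_uminus)
  have Udiff: "\<And>x y. x \<in> U \<Longrightarrow> y \<in> U \<Longrightarrow> x - y \<in> U"
    using Uadd Uminus by (metis diff_conv_add_uminus)
  show "H_design n (s*q0) (n-1) (n-2) ?S"
    unfolding H_design_def
  proof (intro conjI ballI impI)
    show "?S \<subseteq> {u \<in> words n (s*q0). weight u = n - 1}"
    proof
      fix u assume "u \<in> ?S"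
      then have uw: "u \<in> words n (s*q0)" and "\<exists>p<n. u!p = None \<and> (\<forall>k<n. k\<noteq>p \<longrightarrow> u!k \<noteq> None) \<and>
        synd n q0 N p u = c p \<and> hsum n q0 p u mod s = 0" unfolding Sset_def by simp_all
      then obtain p where P: "p < n \<and> u!p = None \<and> (\<forall>k<n. k\<noteq>p \<longrightarrow> u!k \<noteq> None) \<and>
        synd n q0 N p u = c p \<and> hsum n q0 p u mod s = 0" by (elim exE)
      have "length u = n" using uw by (simp add: words_def)
      then have "weight u = n - 1"
        by (rule weight_one_none[of u n p]) (use P in simp_all)
      then show "u \<in> {u \<in> words n (s*q0). weight u = n - 1}" using uw by simp
    qed
  next
    fix v assume v: "v \<in> words n (s*q0)" and wv: "weight v = n - 2"
    obtain i j where IJ: "i<n \<and> j<n \<and> i\<noteq>j \<and> v!i = None \<and> v!j = None \<and>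
      (\<forall>k<n. k\<noteq>i \<longrightarrow> k\<noteq>j \<longrightarrow> v!k \<noteq> None)"
      using two_nones[OF v wv n2] by (elim exE)
    have ij: "i<n" "j<n" "i\<noteq>j" "v!i = None" "v!j = None"
      "\<forall>k<n. k\<noteq>i \<longrightarrow> k\<noteq>j \<longrightarrow> v!k \<noteq> None" using IJ by simp_all
    have lenv: "length v = n" using v by (simp add: words_def)
    define X where "X p r = (\<Sum>k\<in>{..<n}-{p,r}. N p k (the (v!k) mod q0))" for p r
    define Y where "Y p r = (\<Sum>k\<in>{..<n}-{p,r}. the (v!k) div q0)" for p r
    define T where "T p r = c p - X p r" for p r
    have XU: "X p r \<in> U" if "p < n" for p r
      unfolding X_def
    proof (rule sum_in_closed[OF _ U0 Uadd])
      fix k assume "k \<in> {..<n}-{p,r}"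
      then have "k < n" "p \<noteq> k" by auto
      then have "N p k (the (v!k) mod q0) \<in> H p k" using NH that by blast
      thus "N p k (the (v!k) mod q0) \<in> U" using HU by blast
    qed simp
    have TU: "T p r \<in> U" if "p < n" for p r unfolding T_def using Udiff cU XU that by blast
    have fin: "\<exists>!u. u \<in> ?S \<and> extends u v"
      if pr: "p<n" "r<n" "p\<noteq>r" "v!p = None" "v!r = None" "\<forall>k<n. k\<noteq>p \<longrightarrow> k\<noteq>r \<longrightarrow> v!k \<noteq> None"
        and Tp: "T p r \<in> H p r" and Tr: "T r p \<notin> H r p" for p r
    proof -
      have sc1: "\<And>u. (u \<in> ?S \<and> extends u v \<and> u!p = None) \<longleftrightarrow>
          (\<exists>a. a < s*q0 \<and> u = v[r := Some a] \<and> N p r (a mod q0) = T p r \<and> (Y p r + a div q0) mod s = 0)"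
        unfolding T_def X_def Y_def by (rule side_char[OF v pr])
      have pr': "\<forall>k<n. k\<noteq>r \<longrightarrow> k\<noteq>p \<longrightarrow> v!k \<noteq> None" using pr(6) by auto
      have sc2: "\<And>u. (u \<in> ?S \<and> extends u v \<and> u!r = None) \<longleftrightarrow>
          (\<exists>a. a < s*q0 \<and> u = v[p := Some a] \<and> N r p (a mod q0) = T r p \<and> (Y r p + a div q0) mod s = 0)"
        unfolding T_def X_def Y_def by (rule side_char[OF v pr(2,1) pr(3)[symmetric] pr(5,4) pr'])
      obtain a where a: "a < s*q0 \<and> N p r (a mod q0) = T p r \<and> (Y p r + a div q0) mod s = 0"
        and auniq: "\<forall>b. b < s*q0 \<and> N p r (b mod q0) = T p r \<and> (Y p r + b div q0) mod s = 0 \<longrightarrow> b = a"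
        using count_side[OF Nbij[OF pr(1,2,3)] Tp s1, of "Y p r"] by (rule ex1E)
      show ?thesis
      proof (rule ex1I[of _ "v[r := Some a]"])
        have "\<exists>aa. aa < s*q0 \<and> v[r := Some a] = v[r := Some aa] \<and> N p r (aa mod q0) = T p r \<and> (Y p r + aa div q0) mod s = 0"
          by (intro exI[of _ a] conjI refl) (use a in simp_all)
        then have "v[r := Some a] \<in> ?S \<and> extends (v[r := Some a]) v \<and> v[r := Some a] ! p = None"
          by (rule sc1[of "v[r := Some a]", THEN iffD2])
        then show "v[r := Some a] \<in> ?S \<and> extends (v[r := Some a]) v" by simp
      next
        fix u assume u: "u \<in> ?S \<and> extends u v"
        then have "\<exists>p'<n. u!p' = None \<and> (\<forall>k<n. k\<noteq>p' \<longrightarrow> u!k \<noteq> None) \<and>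
          synd n q0 N p' u = c p' \<and> hsum n q0 p' u mod s = 0" unfolding Sset_def by simp
        then obtain p' where P': "p' < n \<and> u!p' = None \<and> (\<forall>k<n. k\<noteq>p' \<longrightarrow> u!k \<noteq> None) \<and>
          synd n q0 N p' u = c p' \<and> hsum n q0 p' u mod s = 0" by (elim exE)
        have p': "p' < n" "u!p' = None" using P' by simp_all
        have "p' = p \<or> p' = r"
        proof (rule ccontr)
          assume "\<not> (p' = p \<or> p' = r)"
          then have "v!p' \<noteq> None" using pr(6) p'(1) by simp
          moreover have "extends u v" using u by simp
          ultimately have "u!p' = v!p'" using p'(1) lenv unfolding extends_def by simp
          thus False using p'(2) \<open>v!p' \<noteq> None\<close> by simp
        qed
        then show "u = v[r := Some a]"
        proof
          assume "p' = p"
          then have "u \<in> ?S \<and> extends u v \<and> u!p = None" using u p'(2) by simp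
          then have "\<exists>b. b < s*q0 \<and> u = v[r := Some b] \<and> N p r (b mod q0) = T p r \<and> (Y p r + b div q0) mod s = 0"
            by (rule sc1[of u, THEN iffD1])
          then obtain b where B: "b < s*q0 \<and> u = v[r := Some b] \<and> N p r (b mod q0) = T p r \<and> (Y p r + b div q0) mod s = 0"
            by (elim exE)
          have "b = a" using auniq B by simp
          thus ?thesis using B by simp
        next
          assume "p' = r"
          then have "u \<in> ?S \<and> extends u v \<and> u!r = None" using u p'(2) by simp
          then have "\<exists>b. b < s*q0 \<and> u = v[p := Some b] \<and> N r p (b mod q0) = T r p \<and> (Y r p + b div q0) mod s = 0"
            by (rule sc2[of u, THEN iffD1])
          then obtain b where "N r p (b mod q0) = T r p" by blast
          thus ?thesis using NH[OF pr(2,1) pr(3)[symmetric], of b] Tr by simp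
        qed
      qed
    qed
    have Kfin: "finite ({..<n}-{i,j})" by simp
    have "X i j - X j i = (\<Sum>k\<in>{..<n}-{i,j}. N i k (the (v!k) mod q0) - N j k (the (v!k) mod q0))"
      unfolding X_def by (simp add: insert_commute sum_subtractf)
    also have "\<dots> \<in> H i j"
    proof (rule sum_in_closed[OF Kfin H0 Hadd])
      fix k assume "k \<in> {..<n}-{i,j}"
      then have k: "k < n" "i \<noteq> k" "j \<noteq> k" by auto
      have "the (v!k) mod q0 < q0" using q0 by simp
      then show "N i k (the (v!k) mod q0) - N j k (the (v!k) mod q0) \<in> H i j"
        by (rule Ncons[OF ij(1) ij(2) k(1) ij(3) k(2) k(3)])
    qed
    finally have XD: "X i j - X j i \<in> H i j" .
    have TD: "T i j - T j i = (c i - c j) - (X i j - X j i)" unfolding T_def by (simp add: algebra_simps)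
    have key: "(T i j \<in> H i j) \<noteq> (T j i \<in> H i j)"
    proof
      assume eq: "(T i j \<in> H i j) = (T j i \<in> H i j)"
      have "T i j - T j i \<in> H i j"
      proof (cases "T i j \<in> H i j")
        case True thus ?thesis using eq Hdiff by simp
      next
        case False thus ?thesis using eq Hidx[OF ij(1,2,3) TU[OF ij(1)] TU[OF ij(2)]] by simp
      qed
      then have "(T i j - T j i) + (X i j - X j i) \<in> H i j" using XD by (rule Hadd)
      then have "c i - c j \<in> H i j" using TD by simp
      thus False using csep[OF ij(1,2,3)] by simp
    qed
    have ij': "\<forall>k<n. k\<noteq>j \<longrightarrow> k\<noteq>i \<longrightarrow> v!k \<noteq> None" using ij(6) by auto
    show "\<exists>!u. u \<in> ?S \<and> extends u v"
    proof (cases "T i j \<in> H i j")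
      case True
      then have "T j i \<notin> H j i" using key Hsym by simp
      thus ?thesis using fin[OF ij True] by simp
    next
      case False
      then have "T j i \<in> H j i" using key Hsym by simp
      thus ?thesis using fin[OF ij(2,1) ij(3)[symmetric] ij(5,4) ij'] False Hsym by simp
    qed
  qed
qed



lemma char2_coeff: "(c::bool mod_ring) + c = 0"
  by (metis mult_2 two_eq_0_bool mult_zero_left)

lemma char2_poly: "(x::bool mod_ring poly) + x = 0"
  by (rule poly_eqI) (simp only: coeff_add char2_coeff coeff_0)

lemma neg_eq_bool: "- (x::bool mod_ring poly) = x"
  using char2_poly[of x] by (simp add: neg_eq_iff_add_eq_0)

lemma coeff_cases: "(c::bool mod_ring) \<noteq> 0 \<Longrightarrow> c = 1"
proof -
  assume c: "c \<noteq> 0"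
  have "card (UNIV::bool mod_ring set) = 2" by simp
  moreover have "card {0, 1::bool mod_ring} = 2" by simp
  moreover have "{0, 1::bool mod_ring} \<subseteq> UNIV" by simp
  ultimately have "{0, 1::bool mod_ring} = UNIV" by (metis card_subset_eq finite)
  then have "c \<in> {0,1}" by simp
  thus "c = 1" using c by simp
qed

lemma card_degree_less:
  assumes k: "k \<ge> 1"
  shows "finite {x::bool mod_ring poly. degree x < k} \<and> card {x::bool mod_ring poly. degree x < k} = 2^k"
proof -
  obtain f :: "bool mod_ring poly" where f: "irreducible f" "degree f = k"
    using exists_irreducible_deg[OF k] by blast
  have fd: "irreducible\<^sub>d f" using f(1) by (simp add: irreducible_connect_field)
  interpret poly_mod_type_irr "CARD(bool)" f by (unfold_locales, auto simp add: fd f(1))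
  have "finite carrier_irr" "card carrier_irr = CARD(bool mod_ring)^(degree f)" by simp_all
  thus ?thesis unfolding carrier_irr_def f(2) by simp
qed

lemma field_design:
  fixes m s :: nat
  assumes m2: "m \<ge> 2" and s1: "s \<ge> 1"
  shows "\<exists>S. H_design (2^m) (s * 2^(m-1)) (2^m - 1) (2^m - 2) S"
proof -
  have m1: "m \<ge> 1" using m2 by simp
  obtain f :: "bool mod_ring poly" where f: "irreducible f" "degree f = m"
    using exists_irreducible_deg[OF m1] by blast
  have fnz: "f \<noteq> 0" using f m1 by auto
  have fpr: "prime_elem f" using f(1) by (rule irreducible_imp_prime_elem)
  define K where "K = {x::bool mod_ring poly. degree x < m}"
  have Kfin: "finite K" and Kcard: "card K = 2^m" using card_degree_less[OF m1] unfolding K_def by auto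
  define K' where "K' = {x::bool mod_ring poly. degree x < m - 1}"
  have K'fin: "finite K'" and K'card: "card K' = 2^(m-1)" using card_degree_less[of "m-1"] m2 unfolding K'_def by auto
  define V where "V = {x \<in> K. coeff x 0 = 0}"
  have VK: "V \<subseteq> K" unfolding V_def by auto
  have bijV: "bij_betw (\<lambda>b. pCons 0 b) K' V"
  proof (rule bij_betw_imageI)
    show "inj_on (\<lambda>b. pCons 0 b) K'" by (simp add: inj_on_def)
    show "(\<lambda>b. pCons 0 b) ` K' = V"
    proof
      show "(\<lambda>b. pCons 0 b) ` K' \<subseteq> V"
      proof
        fix x assume "x \<in> (\<lambda>b. pCons 0 b) ` K'"
        then obtain b where b: "b \<in> K'" "x = pCons 0 b" by blast
        have "degree (pCons 0 b) \<le> Suc (degree b)" by (rule degree_pCons_le)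
        moreover have "degree b < m - 1" using b(1) unfolding K'_def by simp
        ultimately have "degree x < m" using b(2) by simp
        thus "x \<in> V" unfolding V_def K_def using b(2) by simp
      qed
    next
      show "V \<subseteq> (\<lambda>b. pCons 0 b) ` K'"
      proof
        fix x assume x: "x \<in> V"
        obtain a p where ap: "x = pCons a p" by (rule pCons_cases)
        have a0: "a = 0" using x ap unfolding V_def by simp
        have "degree p < m - 1"
        proof (cases "p = 0")
          case True thus ?thesis using m2 by simp
        next
          case False
          then have "degree x = Suc (degree p)" using ap by simp
          moreover have "degree x < m" using x unfolding V_def K_def by simp
          ultimately show ?thesis by linarith
        qed
        thus "x \<in> (\<lambda>b. pCons 0 b) ` K'" using ap a0 unfolding K'_def by blast
      qed
    qed
  qed
  have Vfin: "finite V" using VK Kfin finite_subset by blast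
  have Vcard: "card V = 2^(m-1)" using bij_betw_same_card[OF bijV] K'card by simp
  obtain pos where pos: "bij_betw pos {0..<card K} K" using ex_bij_betw_nat_finite[OF Kfin] by blast
  obtain val where val: "bij_betw val {0..<card V} V" using ex_bij_betw_nat_finite[OF Vfin] by blast
  have pos': "bij_betw pos {..<2^m} K" using pos Kcard by (simp add: atLeast0LessThan)
  have val': "bij_betw val {..<2^(m-1)} V" using val Vcard by (simp add: atLeast0LessThan)
  define phi where "phi d w = (d * w) mod f" for d w :: "bool mod_ring poly"
  have modK: "phi d w \<in> K" for d w
  proof (cases "(d*w) mod f = 0")
    case True thus ?thesis unfolding phi_def K_def using m1 by simp
  next
    case False thus ?thesis unfolding phi_def K_def using degree_mod_less'[OF fnz False] f(2) by simp
  qed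
  have Kadd: "x \<in> K \<Longrightarrow> y \<in> K \<Longrightarrow> x + y \<in> K" for x y unfolding K_def by (simp add: degree_add_less)
  have Kminus: "x \<in> K \<Longrightarrow> - x \<in> K" for x unfolding K_def by simp
  have Kdiff: "x \<in> K \<Longrightarrow> y \<in> K \<Longrightarrow> x - y \<in> K" for x y unfolding K_def by (simp add: degree_diff_less)
  have K0: "0 \<in> K" unfolding K_def using m1 by simp
  have K1: "1 \<in> K" unfolding K_def using m1 by simp
  have Vadd: "x \<in> V \<Longrightarrow> y \<in> V \<Longrightarrow> x + y \<in> V" for x y unfolding V_def using Kadd by simp
  have Vminus: "x \<in> V \<Longrightarrow> - x \<in> V" for x unfolding V_def using Kminus by simp
  have V0: "0 \<in> V" unfolding V_def using K0 by simp
  have phi_inj: "inj_on (phi d) K" if d: "d \<noteq> 0" "d \<in> K" for d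
  proof (rule inj_onI)
    fix a b assume ab: "a \<in> K" "b \<in> K" "phi d a = phi d b"
    then have "f dvd d * a - d * b" unfolding phi_def by (simp add: mod_eq_dvd_iff)
    then have "f dvd d * (a - b)" by (simp add: right_diff_distrib)
    then have "f dvd d \<or> f dvd (a - b)" using fpr by (simp add: prime_elem_dvd_mult_iff)
    moreover have "\<not> f dvd d"
    proof
      assume "f dvd d"
      then have "degree f \<le> degree d" using d(1) by (rule dvd_imp_degree_le)
      thus False using d(2) f(2) unfolding K_def by simp
    qed
    ultimately have fd: "f dvd (a - b)" by simp
    show "a = b"
    proof (rule ccontr)
      assume "a \<noteq> b"
      then have "a - b \<noteq> 0" by simp
      with fd have "degree f \<le> degree (a - b)" by (rule dvd_imp_degree_le)
      moreover have "a - b \<in> K" using Kdiff ab by simp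
      ultimately show False using f(2) unfolding K_def by simp
    qed
  qed
  have phi_surj: "phi d ` K = K" if d: "d \<noteq> 0" "d \<in> K" for d
    by (rule endo_inj_surj[OF Kfin]) (use modK phi_inj[OF d] in auto)
  have dprop: "pos i + pos j \<noteq> 0 \<and> pos i + pos j \<in> K" if ij: "i < 2^m" "j < 2^m" "i \<noteq> j" for i j
  proof
    have pi: "pos i \<in> K" "pos j \<in> K" using pos' ij unfolding bij_betw_def by auto
    show "pos i + pos j \<in> K" using Kadd pi by simp
    show "pos i + pos j \<noteq> 0"
    proof
      assume "pos i + pos j = 0"
      then have "pos i = - pos j" by (simp add: eq_neg_iff_add_eq_0)
      then have "pos i = pos j" by (simp add: neg_eq_bool)
      thus False using pos' ij unfolding bij_betw_def inj_on_def by auto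
    qed
  qed
  have diff_eq: "pos i - pos j = pos i + pos j" for i j
    by (metis diff_conv_add_uminus neg_eq_bool)
  define H where "H i j = phi (pos i + pos j) ` V" for i j
  define N where "N i k a = phi (pos i + pos k) (val a)" for i k a
  have "\<exists>S. H_design (2^m) (s * 2^(m-1)) (2^m - 1) (2^m - 2) S"
  proof (rule design_from_syndrome[where U = K and c = pos and N = N and H = H])
    show "2 \<le> (2::nat)^m"
    proof -
      have "(2::nat)^1 \<le> 2^m" by (rule power_increasing) (use m1 in simp_all)
      thus ?thesis by simp
    qed
    show "1 \<le> s" by (rule s1)
    show "1 \<le> (2::nat)^(m-1)" by simp
    show "H i j = H j i" for i j unfolding H_def by (simp add: add.commute)
    show "0 \<in> H i j" for i j
    proof -
      have "0 = phi (pos i + pos j) 0" unfolding phi_def by simp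
      thus ?thesis unfolding H_def using V0 by (rule image_eqI)
    qed
    show "x + y \<in> H i j" if xyH: "x \<in> H i j" "y \<in> H i j" for i j x y
    proof -
      obtain w1 w2 where w: "w1 \<in> V" "w2 \<in> V" "x = phi (pos i + pos j) w1" "y = phi (pos i + pos j) w2"
        using xyH unfolding H_def by blast
      have "x + y = phi (pos i + pos j) (w1 + w2)" unfolding w phi_def
        by (simp add: distrib_left poly_mod_add_left)
      thus ?thesis unfolding H_def using Vadd w by blast
    qed
    show "- x \<in> H i j" if xH: "x \<in> H i j" for i j x
    proof -
      obtain w where w: "w \<in> V" "x = phi (pos i + pos j) w" using xH unfolding H_def by blast
      have "- x = phi (pos i + pos j) (- w)" unfolding w phi_def by simp
      thus ?thesis unfolding H_def using Vminus w by blast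
    qed
    show "H i j \<subseteq> K" for i j unfolding H_def using modK by blast
    show "0 \<in> K" by (rule K0)
    show "x + y \<in> K" if "x \<in> K" "y \<in> K" for x y using Kadd that by simp
    show "- x \<in> K" if "x \<in> K" for x using Kminus that by simp
    show "pos i \<in> K" if "i < 2^m" for i using pos' that unfolding bij_betw_def by auto
    show "x - y \<in> H i j" if ij: "i < 2^m" "j < 2^m" "i \<noteq> j" and xy: "x \<in> K" "y \<in> K" "x \<notin> H i j" "y \<notin> H i j"
      for i j x y
    proof -
      let ?d = "pos i + pos j"
      have d: "?d \<noteq> 0" "?d \<in> K" using dprop[OF ij] by auto
      obtain wx where wx: "wx \<in> K" "x = phi ?d wx" using xy(1) phi_surj[OF d] by blast
      obtain wy where wy: "wy \<in> K" "y = phi ?d wy" using xy(2) phi_surj[OF d] by blast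
      have "wx \<notin> V" using xy(3) wx unfolding H_def by blast
      then have cx: "coeff wx 0 = 1" using wx(1) coeff_cases unfolding V_def by blast
      have "wy \<notin> V" using xy(4) wy unfolding H_def by blast
      then have cy: "coeff wy 0 = 1" using wy(1) coeff_cases unfolding V_def by blast
      have "x - y = phi ?d (wx - wy)" unfolding wx(2) wy(2) phi_def
        by (simp add: right_diff_distrib poly_mod_diff_left)
      moreover have "wx - wy \<in> V" unfolding V_def using Kdiff wx wy cx cy by simp
      ultimately show ?thesis unfolding H_def by blast
    qed
    show "bij_betw (N i j) {..<2^(m-1)} (H i j)" if ij: "i < 2^m" "j < 2^m" "i \<noteq> j" for i j
    proof -
      have d: "pos i + pos j \<noteq> 0" "pos i + pos j \<in> K" using dprop[OF ij] by auto
      have "inj_on (phi (pos i + pos j)) V" using phi_inj[OF d] VK inj_on_subset by blast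
      then have b2: "bij_betw (phi (pos i + pos j)) V (H i j)" unfolding H_def by (rule inj_on_imp_bij_betw)
      have "bij_betw (phi (pos i + pos j) \<circ> val) {..<2^(m-1)} (H i j)" by (rule bij_betw_trans[OF val' b2])
      thus ?thesis unfolding N_def comp_def .
    qed
    show "N i k a - N j k a \<in> H i j"
      if "i < 2^m" "j < 2^m" "k < 2^m" "i \<noteq> j" "i \<noteq> k" "j \<noteq> k" "a < 2^(m-1)" for i j k a
    proof -
      have va: "val a \<in> V" using val' that(7) unfolding bij_betw_def by auto
      have "N i k a - N j k a = (((pos i + pos k) - (pos j + pos k)) * val a) mod f"
        unfolding N_def phi_def by (simp only: left_diff_distrib poly_mod_diff_left)
      also have "(pos i + pos k) - (pos j + pos k) = pos i - pos j" by simp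
      also have "\<dots> = pos i + pos j" by (rule diff_eq)
      finally have "N i k a - N j k a = phi (pos i + pos j) (val a)" unfolding phi_def .
      thus ?thesis unfolding H_def using va by blast
    qed
    show "pos i - pos j \<notin> H i j" if ij: "i < 2^m" "j < 2^m" "i \<noteq> j" for i j
    proof
      let ?d = "pos i + pos j"
      have d: "?d \<noteq> 0" "?d \<in> K" using dprop[OF ij] by auto
      assume "pos i - pos j \<in> H i j"
      then obtain w where w: "w \<in> V" "?d = phi ?d w" unfolding H_def diff_eq by blast
      have "phi ?d 1 = ?d" unfolding phi_def using d(2) f(2) unfolding K_def by (simp add: mod_poly_less)
      then have "phi ?d w = phi ?d 1" using w by simp
      then have "w = 1" using phi_inj[OF d] w(1) VK K1 unfolding inj_on_def by blast
      thus False using w(1) unfolding V_def by simp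
    qed
  qed
  thus ?thesis .
qed


theorem corollary2:
  fixes s t :: nat
  assumes "s \<ge> 1" and "t \<ge> 1"
  shows "\<exists>S. H_design (2 ^ (t + 1)) (s * 2 ^ t) (2 ^ (t + 1) - 1) (2 ^ (t + 1) - 2) S"
proof -
  have "\<exists>S. H_design (2 ^ (t + 1)) (s * 2 ^ (t + 1 - 1)) (2 ^ (t + 1) - 1) (2 ^ (t + 1) - 2) S"
    by (rule field_design) (use assms in simp_all)
  thus ?thesis by simp
qed

end
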